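(* Let $\Sigma$ be a set of prime numbers, $S$ the multiplicative submonoid of $\mathbb{N}$ generated by $\Sigma$, and $\mathbb{Z}[S^{-1}]\subset\mathbb{Q}$ the corresponding localization. Let $M$ be a locally compact topological $\mathbb{Z}[S^{-1}]$-module. Then $M$ is compactly generated if and only if its Pontryagin dual $\widehat{M}$ has the no small submodules property.
   Context: All topological modules are Hausdorff; $\mathbb{Z}[S^{-1}]$ is discrete; a locally compact topological $\mathbb{Z}[S^{-1}]$-module is a locally compact abelian group with a $\mathbb{Z}[S^{-1}]$-module structure with continuous scalar multiplication. $M$ is compactly generated if it is the submodule generated by some compact subset. $\widehat{M}$ is the group of continuous homomorphisms $M\to\mathbb{S}^1$ with the compact-open topology, a topological $\mathbb{Z}[S^{-1}]$-module via $\chi^r(m)=\chi(rm)$. A topological module has the no small submodules property if some neighbourhood of $0$ contains no nonzero submodule. *)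

theory Defs
  imports "HOL-Analysis.Analysis"
begin

inductive_set gen_monoid :: "nat set \<Rightarrow> nat set" for \<Sigma> :: "nat set" where
  one: "1 \<in> gen_monoid \<Sigma>"
| mult: "p \<in> \<Sigma> \<Longrightarrow> n \<in> gen_monoid \<Sigma> \<Longrightarrow> p * n \<in> gen_monoid \<Sigma>"

definition ZS :: "nat set \<Rightarrow> rat set" where
  "ZS \<Sigma> = {of_int a / of_nat s | a s. s \<in> gen_monoid \<Sigma>}"

text \<open>A Z[S^-1]-module structure on an abelian group, given by a scalar multiplication
  defined on (at least) the elements of Z[S^-1].\<close>
definition is_ZS_module :: "nat set \<Rightarrow> (rat \<Rightarrow> 'm::ab_group_add \<Rightarrow> 'm) \<Rightarrow> bool" where
  "is_ZS_module \<Sigma> smul \<longleftrightarrow>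
     (\<forall>r\<in>ZS \<Sigma>. \<forall>x y. smul r (x + y) = smul r x + smul r y) \<and>
     (\<forall>r\<in>ZS \<Sigma>. \<forall>s\<in>ZS \<Sigma>. \<forall>x. smul (r + s) x = smul r x + smul s x) \<and>
     (\<forall>r\<in>ZS \<Sigma>. \<forall>s\<in>ZS \<Sigma>. \<forall>x. smul (r * s) x = smul r (smul s x)) \<and>
     (\<forall>x. smul 1 x = x)"

text \<open>Topological module over the discrete ring Z[S^-1]: scalar multiplication by each
  ring element is continuous.\<close>
definition is_top_ZS_module :: "nat set \<Rightarrow> (rat \<Rightarrow> 'm::topological_ab_group_add \<Rightarrow> 'm) \<Rightarrow> bool" where
  "is_top_ZS_module \<Sigma> smul \<longleftrightarrow>
     is_ZS_module \<Sigma> smul \<and> (\<forall>r\<in>ZS \<Sigma>. continuous_on UNIV (smul r))"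

definition is_submodule :: "nat set \<Rightarrow> (rat \<Rightarrow> 'm::ab_group_add \<Rightarrow> 'm) \<Rightarrow> 'm set \<Rightarrow> bool" where
  "is_submodule \<Sigma> smul N \<longleftrightarrow>
     0 \<in> N \<and> (\<forall>x\<in>N. \<forall>y\<in>N. x + y \<in> N) \<and> (\<forall>r\<in>ZS \<Sigma>. \<forall>x\<in>N. smul r x \<in> N)"

definition generated_submodule :: "nat set \<Rightarrow> (rat \<Rightarrow> 'm::ab_group_add \<Rightarrow> 'm) \<Rightarrow> 'm set \<Rightarrow> 'm set" where
  "generated_submodule \<Sigma> smul K = \<Inter>{N. is_submodule \<Sigma> smul N \<and> K \<subseteq> N}"

definition compactly_generated :: "nat set \<Rightarrow> (rat \<Rightarrow> 'm::topological_ab_group_add \<Rightarrow> 'm) \<Rightarrow> bool" where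
  "compactly_generated \<Sigma> smul \<longleftrightarrow>
     (\<exists>K. compact K \<and> generated_submodule \<Sigma> smul K = UNIV)"

definition characters :: "('m::topological_ab_group_add \<Rightarrow> complex) set" where
  "characters = {c. continuous_on UNIV c \<and> (\<forall>x. cmod (c x) = 1) \<and>
                     (\<forall>x y. c (x + y) = c x * c y)}"

definition dual_topology :: "('m::topological_ab_group_add \<Rightarrow> complex) topology" where
  "dual_topology = subtopology
     (topology_generated_by {{c. c ` K \<subseteq> U} | K U. compact K \<and> open U}) characters"

text \<open>Submodules of the dual module, with action chi^r(m) = chi(r m); the zero is the
  trivial character and addition is pointwise multiplication.\<close>
definition is_dual_submodule :: "nat set \<Rightarrow> (rat \<Rightarrow> 'm::topological_ab_group_add \<Rightarrow> 'm)
    \<Rightarrow> ('m \<Rightarrow> complex) set \<Rightarrow> bool" where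
  "is_dual_submodule \<Sigma> smul H \<longleftrightarrow>
     H \<subseteq> characters \<and> (\<lambda>_. 1) \<in> H \<and>
     (\<forall>c\<in>H. \<forall>d\<in>H. (\<lambda>x. c x * d x) \<in> H) \<and>
     (\<forall>r\<in>ZS \<Sigma>. \<forall>c\<in>H. (\<lambda>x. c (smul r x)) \<in> H)"

definition dual_no_small_submodules :: "nat set \<Rightarrow> (rat \<Rightarrow> 'm::topological_ab_group_add \<Rightarrow> 'm) \<Rightarrow> bool" where
  "dual_no_small_submodules \<Sigma> smul \<longleftrightarrow>
     (\<exists>V. openin dual_topology V \<and> (\<lambda>_. 1) \<in> V \<and>
        (\<forall>H. is_dual_submodule \<Sigma> smul H \<and> H \<subseteq> V \<longrightarrow> H = {\<lambda>_. 1}))"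

end

theory Submission imports Defs begin

lemma gen_monoid_mult:
  "m \<in> gen_monoid \<Sigma> \<Longrightarrow> n \<in> gen_monoid \<Sigma> \<Longrightarrow> m * n \<in> gen_monoid \<Sigma>"
  by (induction m rule: gen_monoid.induct) (auto simp: mult.assoc intro: gen_monoid.intros)

lemma ZS_int: "(of_int a :: rat) \<in> ZS \<Sigma>"
  unfolding ZS_def by (rule CollectI, rule exI[of _ a], rule exI[of _ 1]) (use gen_monoid.one[of \<Sigma>] in auto)

lemma ZS_mult: assumes "r \<in> ZS \<Sigma>" "q \<in> ZS \<Sigma>" shows "r * q \<in> ZS \<Sigma>"
proof -
  obtain a s where r: "r = of_int a / of_nat s" "s \<in> gen_monoid \<Sigma>" using assms(1) unfolding ZS_def by blast
  obtain b t where q: "q = of_int b / of_nat t" "t \<in> gen_monoid \<Sigma>" using assms(2) unfolding ZS_def by blast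
  have "r * q = of_int (a*b) / of_nat (s*t)" using r q by simp
  moreover have "s * t \<in> gen_monoid \<Sigma>" using r q gen_monoid_mult by blast
  ultimately show ?thesis unfolding ZS_def by blast
qed

locale zsm =
  fixes \<Sigma> :: "nat set" and smul :: "rat \<Rightarrow> 'm::ab_group_add \<Rightarrow> 'm"
  assumes M: "is_ZS_module \<Sigma> smul"
begin

abbreviation zm :: "int \<Rightarrow> 'm \<Rightarrow> 'm" where "zm n x \<equiv> smul (of_int n) x"

lemma smul_add: "r \<in> ZS \<Sigma> \<Longrightarrow> smul r (x + y) = smul r x + smul r y"
  using M unfolding is_ZS_module_def by blast

lemma smul_scal_add: "r \<in> ZS \<Sigma> \<Longrightarrow> s \<in> ZS \<Sigma> \<Longrightarrow> smul (r + s) x = smul r x + smul s x"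
  using M unfolding is_ZS_module_def by blast

lemma smul_scal_mult: "r \<in> ZS \<Sigma> \<Longrightarrow> s \<in> ZS \<Sigma> \<Longrightarrow> smul (r * s) x = smul r (smul s x)"
  using M unfolding is_ZS_module_def by blast

lemma smul_one: "smul 1 x = x"
  using M unfolding is_ZS_module_def by blast

lemma zm_add: "zm (m + n) x = zm m x + zm n x"
  using smul_scal_add[OF ZS_int ZS_int] by simp

lemma zm_mult: "zm (m * n) x = zm m (zm n x)"
  using smul_scal_mult[OF ZS_int ZS_int] by simp

lemma zm_1: "zm 1 x = x" using smul_one by simp

lemma zm_0: "zm 0 x = 0"
  using zm_add[of 0 0 x] by simp

lemma smul_0: "r \<in> ZS \<Sigma> \<Longrightarrow> smul r 0 = 0"
  using smul_add[of r 0 0] by simp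

lemma zm_right0: "zm n 0 = 0" using smul_0[OF ZS_int] .

lemma zm_distrib: "zm n (x + y) = zm n x + zm n y" using smul_add[OF ZS_int] .

lemma zm_neg: "zm (- n) x = - zm n x"
  using zm_add[of "-n" n x] zm_0[of x] by (simp add: eq_neg_iff_add_eq_0)

lemma zm_minus1: "zm (-1) x = - x"
  using zm_neg[of 1 x] zm_1 by simp

lemma zm_suc: "zm (n + 1) x = zm n x + x"
  using zm_add[of n 1 x] zm_1 by simp

lemma char_powi:
  assumes D0: "\<And>n. zm n x \<in> D"
    and hom: "\<And>a b. a \<in> D \<Longrightarrow> b \<in> D \<Longrightarrow> f (a + b) = f a * f b"
    and unit: "\<And>a. a \<in> D \<Longrightarrow> cmod (f a) = 1"
  shows "f (zm n x) = f x powi n"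
proof -
  have x: "x \<in> D" using D0[of 1] zm_1 by simp
  have fx: "f x \<noteq> 0" using unit[OF x] by auto
  have "0 \<in> D" using D0[of 0] zm_0 by simp
  then have "f 0 = f 0 * f 0" using hom[of 0 0] by simp
  moreover have "f 0 \<noteq> 0" using unit[OF \<open>0 \<in> D\<close>] by auto
  ultimately have f0: "f 0 = 1" by simp
  show ?thesis
  proof (induction n rule: int_induct[where k=0])
    case base
    then show ?case using zm_0 f0 by simp
  next
    case (step1 i)
    have "f (zm (i+1) x) = f (zm i x) * f x" using zm_suc hom[OF D0 x] by simp
    then show ?case using step1 fx by (simp add: power_int_add_1)
  next
    case (step2 i)
    have e: "zm i x = zm (i - 1) x + x" using zm_suc[of "i-1" x] by simp
    have "f (zm i x) = f (zm (i - 1) x) * f x" unfolding e using hom[OF D0[of "i-1"] x] by simp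
    then have "f (zm (i - 1) x) = f (zm i x) / f x" using fx by (simp add: field_simps)
    then show ?case using step2 fx by (simp add: power_int_diff)
  qed
qed

end
context zsm begin

definition valid :: "('m \<times> complex) set \<Rightarrow> bool" where
  "valid G \<longleftrightarrow> (\<forall>x u v. (x,u)\<in>G \<longrightarrow> (x,v)\<in>G \<longrightarrow> u = v) \<and> 0 \<in> fst ` G \<and>
     (\<forall>x u y v. (x,u)\<in>G \<longrightarrow> (y,v)\<in>G \<longrightarrow> (x + y, u * v)\<in>G) \<and>
     (\<forall>x u n. (x,u)\<in>G \<longrightarrow> zm n x \<in> fst ` G) \<and> (\<forall>x u. (x,u)\<in>G \<longrightarrow> cmod u = 1)"

definition gf :: "('m \<times> complex) set \<Rightarrow> 'm \<Rightarrow> complex" where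
  "gf G x = (THE u. (x,u) \<in> G)"

lemma validD:
  assumes "valid G"
  shows "(x,u)\<in>G \<Longrightarrow> (x,v)\<in>G \<Longrightarrow> u = v" and "0 \<in> fst ` G"
    and "(x,u)\<in>G \<Longrightarrow> (y,v)\<in>G \<Longrightarrow> (x + y, u * v)\<in>G"
    and "(x,u)\<in>G \<Longrightarrow> zm n x \<in> fst ` G" and "(x,u)\<in>G \<Longrightarrow> cmod u = 1"
  using assms unfolding valid_def by metis+

lemma gf_eq: "valid G \<Longrightarrow> (x,u) \<in> G \<Longrightarrow> gf G x = u"
  unfolding gf_def by (rule the_equality) (auto dest: validD(1))

lemma gf_in: "valid G \<Longrightarrow> x \<in> fst ` G \<Longrightarrow> (x, gf G x) \<in> G"
proof -
  assume v: "valid G" and x: "x \<in> fst ` G"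
  then obtain u where "(x,u) \<in> G" by auto
  then show ?thesis using gf_eq[OF v] by simp
qed

lemma v_add: "valid G \<Longrightarrow> x \<in> fst ` G \<Longrightarrow> y \<in> fst ` G \<Longrightarrow> x + y \<in> fst ` G \<and> gf G (x+y) = gf G x * gf G y"
proof -
  assume v: "valid G" and x: "x \<in> fst ` G" and y: "y \<in> fst ` G"
  have h: "(x + y, gf G x * gf G y) \<in> G" using validD(3)[OF v gf_in[OF v x] gf_in[OF v y]] .
  have "x + y \<in> fst ` G" using h by (metis fst_conv image_eqI)
  then show ?thesis using gf_eq[OF v h] by simp
qed

lemma v_zm: "valid G \<Longrightarrow> x \<in> fst ` G \<Longrightarrow> zm n x \<in> fst ` G"
  using gf_in validD(4) by blast

lemma v_unit: "valid G \<Longrightarrow> x \<in> fst ` G \<Longrightarrow> cmod (gf G x) = 1"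
  using gf_in validD(5) by blast

lemma v_powi: "valid G \<Longrightarrow> x \<in> fst ` G \<Longrightarrow> gf G (zm n x) = gf G x powi n"
proof -
  assume v: "valid G" and x: "x \<in> fst ` G"
  show ?thesis
  proof (rule char_powi[where D="fst ` G"])
    show "zm k x \<in> fst ` G" for k using v_zm[OF v x] .
    show "gf G (a + b) = gf G a * gf G b" if "a \<in> fst ` G" "b \<in> fst ` G" for a b
      using v_add[OF v that] by simp
    show "cmod (gf G a) = 1" if "a \<in> fst ` G" for a using v_unit[OF v that] .
  qed
qed

lemma v_zero: "valid G \<Longrightarrow> gf G 0 = 1"
proof -
  assume v: "valid G"
  have z: "0 \<in> fst ` G" using validD(2)[OF v] .
  have "gf G (zm 0 0) = gf G 0 powi 0" using v_powi[OF v z] .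
  then show ?thesis using zm_0 by simp
qed

lemma v_minus: "valid G \<Longrightarrow> x \<in> fst ` G \<Longrightarrow> - x \<in> fst ` G"
  using v_zm[of G x "-1"] zm_minus1 by simp

lemma extend:
  assumes v: "valid G" and z: "cmod z = 1"
    and C: "\<And>n. zm n y \<in> fst ` G \<Longrightarrow> z powi n = gf G (zm n y)"
  defines "G' \<equiv> {(a + zm n y, gf G a * z powi n) | a n. a \<in> fst ` G}"
  shows "valid G' \<and> G \<subseteq> G' \<and> (y, z) \<in> G'"
proof -
  let ?D = "fst ` G"
  have z0: "z \<noteq> 0" using z by auto
  have wd: "gf G a * z powi n = gf G a' * z powi n'"
    if a: "a \<in> ?D" and a': "a' \<in> ?D" and e: "a + zm n y = a' + zm n' y" for a a' n n'
  proof -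
    have "zm (n' - n) y = zm n' y + zm (- n) y" using zm_add[of n' "-n" y] by simp
    also have "\<dots> = a - a'" using e zm_neg[of n y] by (simp add: algebra_simps)
    finally have d: "zm (n' - n) y = a - a'" .
    have aa: "a - a' \<in> ?D" using v_add[OF v a v_minus[OF v a']] by simp
    have "z powi (n' - n) = gf G (a - a')" using C[of "n'-n"] d aa by simp
    moreover have "gf G a = gf G a' * gf G (a - a')"
      using v_add[OF v a' aa] by simp
    ultimately have "gf G a = gf G a' * z powi (n' - n)" by simp
    then have "gf G a * z powi n = gf G a' * (z powi (n' - n) * z powi n)" by simp
    also have "z powi (n' - n) * z powi n = z powi n'"
      using power_int_add[of z "n'-n" n] z0 by simp
    finally show ?thesis .
  qed
  have "valid G'"
    unfolding valid_def
  proof (intro conjI allI impI)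
    fix x u v assume "(x,u) \<in> G'" "(x,v) \<in> G'"
    then obtain a n a' n' where "a \<in> ?D" "x = a + zm n y" "u = gf G a * z powi n"
      "a' \<in> ?D" "x = a' + zm n' y" "v = gf G a' * z powi n'"
      unfolding G'_def by blast
    then show "u = v" using wd by metis
  next
    have "0 \<in> ?D" using validD(2)[OF v] .
    then have "(0 + zm 0 y, gf G 0 * z powi 0) \<in> G'" unfolding G'_def by blast
    then show "0 \<in> fst ` G'" using zm_0 by (metis add_0 fst_conv image_eqI)
  next
    fix x u x' u' assume "(x,u) \<in> G'" "(x',u') \<in> G'"
    then obtain a n a' n' where a: "a \<in> ?D" "x = a + zm n y" "u = gf G a * z powi n"
      and a': "a' \<in> ?D" "x' = a' + zm n' y" "u' = gf G a' * z powi n'"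
      unfolding G'_def by blast
    have "x + x' = (a + a') + zm (n + n') y" using a a' zm_add[of n n' y] by (simp add: algebra_simps)
    moreover have "u * u' = gf G (a + a') * z powi (n + n')"
      using a a' v_add[OF v a(1) a'(1)] power_int_add[of z n n'] z0 by simp
    moreover have "a + a' \<in> ?D" using v_add[OF v a(1) a'(1)] by simp
    ultimately show "(x + x', u * u') \<in> G'" unfolding G'_def by blast
  next
    fix x u k assume "(x,u) \<in> G'"
    then obtain a n where a: "a \<in> ?D" "x = a + zm n y" unfolding G'_def by blast
    have "zm k x = zm k a + zm (k * n) y" using a zm_distrib zm_mult by simp
    moreover have "zm k a \<in> ?D" using v_zm[OF v a(1)] .
    ultimately have "(zm k x, gf G (zm k a) * z powi (k*n)) \<in> G'" unfolding G'_def by blast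
    then show "zm k x \<in> fst ` G'" by (metis fst_conv image_eqI)
  next
    fix x u assume "(x,u) \<in> G'"
    then obtain a n where a: "a \<in> ?D" "u = gf G a * z powi n" unfolding G'_def by blast
    then show "cmod u = 1" using v_unit[OF v a(1)] z by (simp add: norm_mult norm_power_int)
  qed
  moreover have "G \<subseteq> G'"
  proof
    fix p assume p: "p \<in> G"
    obtain x u where xu: "p = (x,u)" by (cases p)
    have x: "x \<in> ?D" using p xu by (metis fst_conv image_eqI)
    have "(x + zm 0 y, gf G x * z powi 0) \<in> G'" unfolding G'_def using x by blast
    then show "p \<in> G'" using gf_eq[OF v] p xu zm_0 by simp
  qed
  moreover have "(y, z) \<in> G'"
  proof -
    have "0 \<in> ?D" using validD(2)[OF v] .
    then have "(0 + zm 1 y, gf G 0 * z powi 1) \<in> G'" unfolding G'_def by blast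
    then show ?thesis using zm_1 v_zero[OF v] by simp
  qed
  ultimately show ?thesis by blast
qed


lemma int_ideal:
  fixes I :: "int set"
  assumes I0: "0 \<in> I" and Iadd: "\<And>a b. a \<in> I \<Longrightarrow> b \<in> I \<Longrightarrow> a + b \<in> I"
    and Imul: "\<And>a m. a \<in> I \<Longrightarrow> m * a \<in> I"
  shows "I = {0} \<or> (\<exists>k>0. k \<in> I \<and> (\<forall>n\<in>I. k dvd n))"
proof (cases "\<exists>n>0. n \<in> I")
  case False
  have "I = {0}"
  proof
    show "I \<subseteq> {0}"
    proof
      fix n assume n: "n \<in> I"
      have "- n \<in> I" using Imul[OF n, of "-1"] by simp
      then show "n \<in> {0}" using False n by (cases "n > 0"; cases "n < 0") auto
    qed
  qed (use I0 in auto)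
  then show ?thesis by blast
next
  case True
  then obtain n0 where n0: "n0 > 0" "n0 \<in> I" by blast
  define P where "P = (\<lambda>m::nat. m > 0 \<and> int m \<in> I)"
  have "P (nat n0)" using n0 unfolding P_def by simp
  then have Pk: "P (LEAST m. P m)" by (rule LeastI)
  define k where "k = int (LEAST m. P m)"
  have k: "k > 0" "k \<in> I" using Pk unfolding P_def k_def by auto
  have "k dvd n" if n: "n \<in> I" for n
  proof (rule ccontr)
    assume nd: "\<not> k dvd n"
    have eq: "n mod k = n + (- (n div k)) * k" by (simp add: mod_div_mult_eq[symmetric] algebra_simps)
    have "n + (- (n div k)) * k \<in> I" by (rule Iadd[OF n Imul[OF k(2)]])
    then have r: "n mod k \<in> I" using eq by metis
    have r0: "n mod k > 0" using nd k(1) by (metis dvd_eq_mod_eq_0 le_less pos_mod_sign)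
    have r1: "n mod k < k" using k(1) by simp
    have "P (nat (n mod k))" using r r0 unfolding P_def by simp
    then have "(LEAST m. P m) \<le> nat (n mod k)" by (rule Least_le)
    then show False using r1 r0 unfolding k_def by linarith
  qed
  then show ?thesis using k by blast
qed

lemma zexist:
  assumes v: "valid G" and y: "y \<notin> fst ` G"
  shows "\<exists>z. cmod z = 1 \<and> (\<forall>n. zm n y \<in> fst ` G \<longrightarrow> z powi n = gf G (zm n y)) \<and>
           ((\<forall>x\<in>fst ` G. gf G x = 1) \<longrightarrow> z \<noteq> 1)"
proof -
  define I where "I = {n. zm n y \<in> fst ` G}"
  have "0 \<in> I" unfolding I_def using zm_0 validD(2)[OF v] by simp
  moreover have "a + b \<in> I" if "a \<in> I" "b \<in> I" for a b
    using that v_add[OF v] zm_add unfolding I_def by simp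
  moreover have "m * a \<in> I" if "a \<in> I" for a m
    using that v_zm[OF v] zm_mult unfolding I_def by simp
  ultimately have "I = {0} \<or> (\<exists>k>0. k \<in> I \<and> (\<forall>n\<in>I. k dvd n))" by (rule int_ideal)
  then show ?thesis
  proof
    assume I: "I = {0}"
    have "(\<forall>n. zm n y \<in> fst ` G \<longrightarrow> (-1::complex) powi n = gf G (zm n y))"
    proof (intro allI impI)
      fix n assume "zm n y \<in> fst ` G"
      then have "n = 0" using I unfolding I_def by auto
      then show "(-1::complex) powi n = gf G (zm n y)" using zm_0 v_zero[OF v] by simp
    qed
    then show ?thesis by (intro exI[of _ "-1"]) auto
  next
    assume "\<exists>k>0. k \<in> I \<and> (\<forall>n\<in>I. k dvd n)"
    then obtain k where k: "k > 0" "k \<in> I" "\<And>n. n \<in> I \<Longrightarrow> k dvd n" by blast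
    have kD: "zm k y \<in> fst ` G" using k(2) unfolding I_def by simp
    define w where "w = gf G (zm k y)"
    have w1: "cmod w = 1" unfolding w_def using v_unit[OF v kD] .
    have C: "z powi n = gf G (zm n y)" if zk: "z powi k = w" and n: "zm n y \<in> fst ` G" for z n
    proof -
      obtain q where q: "n = k * q" using k(3)[of n] n unfolding I_def by auto
      have "gf G (zm n y) = gf G (zm q (zm k y))" using q zm_mult[of q k y] by (simp add: mult.commute)
      also have "\<dots> = w powi q" unfolding w_def using v_powi[OF v kD] .
      also have "\<dots> = z powi n" using q zk by (simp add: power_int_mult)
      finally show ?thesis by simp
    qed
    show ?thesis
    proof (cases "\<forall>x\<in>fst ` G. gf G x = 1")
      case False
      define z where "z = exp (ln w / of_int k)"
      have "z powi k = z ^ nat k" using k(1) by (simp add: power_int_def)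
      also have "\<dots> = exp (of_nat (nat k) * (ln w / of_int k))" unfolding z_def by (rule exp_of_nat_mult[symmetric])
      also have "of_nat (nat k) * (ln w / of_int k) = ln w" using k(1) by simp
      also have "exp (ln w) = w" using w1 by (intro exp_Ln) auto
      finally have zk: "z powi k = w" .
      have "w \<noteq> 0" using w1 by auto
      then have "cmod z = 1" unfolding z_def using w1 by simp
      then show ?thesis using C[OF zk] False by blast
    next
      case True
      have w: "w = 1" using True kD unfolding w_def by blast
      have k1: "k \<noteq> 1"
      proof
        assume "k = 1"
        then have "zm k y = y" using zm_1 by simp
        then show False using kD y by simp
      qed
      define z where "z = exp (2 * of_real pi * \<i> / of_int k)"
      have "z powi k = z ^ nat k" using k(1) by (simp add: power_int_def)
      also have "\<dots> = exp (of_nat (nat k) * (2 * of_real pi * \<i> / of_int k))" unfolding z_def by (rule exp_of_nat_mult[symmetric])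
      also have "of_nat (nat k) * (2 * of_real pi * \<i> / of_int k) = 2 * of_real pi * \<i>" using k(1) by simp
      also have "exp (2 * of_real pi * \<i>) = 1" by (simp add: exp_eq_1)
      finally have zk: "z powi k = w" using w by simp
      have zn: "cmod z = 1" unfolding z_def by simp
      have "z \<noteq> 1"
      proof
        assume "z = 1"
        then obtain n :: int where n: "Im (2 * of_real pi * \<i> / of_int k) = of_int (2 * n) * pi"
          unfolding z_def exp_eq_1 by blast
        have "Im (2 * of_real pi * \<i> / of_int k) = 2 * pi / k"
        proof -
          have "2 * of_real pi * \<i> / of_int k = complex_of_real (2 * pi / k) * \<i>" by simp
          then show ?thesis by simp
        qed
        then have "2 * pi / k = 2 * n * pi" using n by simp
        then have "1 = k * n" using k(1) pi_gt_zero by (simp add: field_simps) (metis mult.commute mult.left_commute of_int_eq_1_iff of_int_mult mult_cancel_right1 pi_neq_zero)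
        then show False using k(1) k1 by (metis int_one_le_iff_zero_less zmult_eq_1_iff less_le pos_zmult_eq_1_iff)
      qed
      then show ?thesis using C[OF zk] zn by blast
    qed
  qed
qed


lemma valid_Union:
  assumes C: "C \<noteq> {}" "\<And>X. X \<in> C \<Longrightarrow> valid X" "\<And>X Y. X \<in> C \<Longrightarrow> Y \<in> C \<Longrightarrow> X \<subseteq> Y \<or> Y \<subseteq> X"
  shows "valid (\<Union>C)"
  unfolding valid_def
proof (intro conjI allI impI)
  fix x u v assume "(x,u) \<in> \<Union>C" "(x,v) \<in> \<Union>C"
  then obtain X Y where XY: "X \<in> C" "Y \<in> C" "(x,u) \<in> X" "(x,v) \<in> Y" by blast
  show "u = v"
  proof (cases "X \<subseteq> Y")
    case True then show ?thesis using validD(1)[OF C(2)[OF XY(2)]] XY by blast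
  next
    case False then have "Y \<subseteq> X" using C(3)[OF XY(1,2)] by blast
    then show ?thesis using validD(1)[OF C(2)[OF XY(1)]] XY by blast
  qed
next
  obtain X where X: "X \<in> C" using C(1) by blast
  then show "0 \<in> fst ` \<Union>C" using validD(2)[OF C(2)[OF X]] by blast
next
  fix x u y v assume "(x,u) \<in> \<Union>C" "(y,v) \<in> \<Union>C"
  then obtain X Y where XY: "X \<in> C" "Y \<in> C" "(x,u) \<in> X" "(y,v) \<in> Y" by blast
  show "(x + y, u * v) \<in> \<Union>C"
  proof (cases "X \<subseteq> Y")
    case True then show ?thesis using validD(3)[OF C(2)[OF XY(2)]] XY by blast
  next
    case False then have "Y \<subseteq> X" using C(3)[OF XY(1,2)] by blast
    then show ?thesis using validD(3)[OF C(2)[OF XY(1)]] XY by blast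
  qed
next
  fix x u n assume "(x,u) \<in> \<Union>C"
  then obtain X where X: "X \<in> C" "(x,u) \<in> X" by blast
  then show "zm n x \<in> fst ` \<Union>C" using validD(4)[OF C(2)[OF X(1)] X(2)] by blast
next
  fix x u assume "(x,u) \<in> \<Union>C"
  then obtain X where X: "X \<in> C" "(x,u) \<in> X" by blast
  then show "cmod u = 1" using validD(5)[OF C(2)[OF X(1)] X(2)] by blast
qed

lemma char_exists:
  assumes N0: "0 \<in> N" and Nadd: "\<And>a b. a \<in> N \<Longrightarrow> b \<in> N \<Longrightarrow> a + b \<in> N"
    and Nzm: "\<And>a n. a \<in> N \<Longrightarrow> zm n a \<in> N" and x0: "x0 \<notin> N"
  shows "\<exists>ch. (\<forall>x y. ch (x + y) = ch x * ch y) \<and> (\<forall>x. cmod (ch x) = 1) \<and> (\<forall>a\<in>N. ch a = 1) \<and> ch x0 \<noteq> 1"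
proof -
  define G0 where "G0 = (\<lambda>a. (a, 1::complex)) ` N"
  have fG0: "fst ` G0 = N" unfolding G0_def by (simp add: image_image)
  have memG0: "(x,u) \<in> G0 \<longleftrightarrow> x \<in> N \<and> u = 1" for x u unfolding G0_def by auto
  have vG0: "valid G0"
    unfolding valid_def fG0 memG0 by (simp add: N0 Nadd Nzm)
  have g0: "\<forall>x\<in>fst ` G0. gf G0 x = 1" unfolding fG0 using gf_eq[OF vG0] memG0 by simp
  have x0': "x0 \<notin> fst ` G0" using fG0 x0 by simp
  obtain z where z: "cmod z = 1" "\<forall>n. zm n x0 \<in> fst ` G0 \<longrightarrow> z powi n = gf G0 (zm n x0)"
    "(\<forall>x\<in>fst ` G0. gf G0 x = 1) \<longrightarrow> z \<noteq> 1"
    using zexist[OF vG0 x0'] by blast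
  have z3: "z \<noteq> 1" using z(3) g0 by blast
  obtain G1 where G1: "valid G1" "G0 \<subseteq> G1" "(x0, z) \<in> G1"
    using extend[OF vG0 z(1), of x0] z(2) by blast
  define A where "A = {G. valid G \<and> G1 \<subseteq> G}"
  have "\<forall>C\<in>chains A. \<exists>U\<in>A. \<forall>X\<in>C. X \<subseteq> U"
  proof
    fix C assume C: "C \<in> chains A"
    show "\<exists>U\<in>A. \<forall>X\<in>C. X \<subseteq> U"
    proof (cases "C = {}")
      case True then show ?thesis using G1 unfolding A_def by blast
    next
      case False
      have CA: "C \<subseteq> A" using C unfolding chains_def by blast
      have "valid (\<Union>C)"
        by (rule valid_Union[OF False]) (use CA chainsD[OF C] in \<open>auto simp: A_def\<close>)
      moreover have "G1 \<subseteq> \<Union>C" using False CA unfolding A_def by blast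
      ultimately show ?thesis unfolding A_def by blast
    qed
  qed
  from Zorn_Lemma2[OF this] obtain M where M: "M \<in> A" "\<And>X. X \<in> A \<Longrightarrow> M \<subseteq> X \<Longrightarrow> X = M"
    by blast
  have vM: "valid M" and G1M: "G1 \<subseteq> M" using M(1) unfolding A_def by auto
  have full: "fst ` M = UNIV"
  proof (rule ccontr)
    assume "fst ` M \<noteq> UNIV"
    then obtain y where y: "y \<notin> fst ` M" by blast
    obtain w where w: "cmod w = 1" "\<forall>n. zm n y \<in> fst ` M \<longrightarrow> w powi n = gf M (zm n y)"
      using zexist[OF vM y] by blast
    obtain M' where M': "valid M'" "M \<subseteq> M'" "(y, w) \<in> M'"
      using extend[OF vM w(1), of y] w(2) by blast
    have "M' \<in> A" using M' G1M unfolding A_def by blast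
    then have "M' = M" using M(2) M'(2) by blast
    then show False using M'(3) y by (metis fst_conv image_eqI)
  qed
  define ch where "ch = gf M"
  have "\<forall>x y. ch (x + y) = ch x * ch y" unfolding ch_def using v_add[OF vM] full by simp
  moreover have "\<forall>x. cmod (ch x) = 1" unfolding ch_def using v_unit[OF vM] full by simp
  moreover have "\<forall>a\<in>N. ch a = 1"
  proof
    fix a assume "a \<in> N"
    then have "(a, 1) \<in> M" using G1M G1(2) memG0 by blast
    then show "ch a = 1" unfolding ch_def using gf_eq[OF vM] by blast
  qed
  moreover have "ch x0 \<noteq> 1" unfolding ch_def using gf_eq[OF vM] G1M G1(3) z3 by blast
  ultimately show ?thesis by blast
qed

end

lemma circle_pos_powers:
  fixes w :: complex
  assumes w1: "cmod w = 1" and pos: "\<And>n::nat. Re (w ^ n) > 0"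
  shows "w = 1"
proof -
  define t where "t = Arg w"
  have w0: "w \<noteq> 0" using w1 by auto
  have wc: "w = cis t" unfolding t_def using cis_Arg[OF w0] w1 by (simp add: sgn_div_norm)
  have tb: "- pi < t" "t \<le> pi" unfolding t_def using Arg_bounded by auto
  show ?thesis
  proof (cases "t = 0")
    case True then show ?thesis using wc by simp
  next
    case False
    define a where "a = \<bar>t\<bar>"
    have a0: "a > 0" and api: "a \<le> pi" using False tb unfolding a_def by auto
    define n where "n = nat \<lceil>pi / (2 * a)\<rceil>"
    have c1: "real n \<ge> pi / (2 * a)" unfolding n_def by linarith
    have pp: "pi / (2 * a) > 0" using a0 by simp
    have "real n = of_int \<lceil>pi / (2 * a)\<rceil>" unfolding n_def using pp by simp
    then have c2: "real n < pi / (2 * a) + 1" using ceiling_correct[of "pi / (2 * a)"] by linarith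
    have l: "real n * a \<ge> pi / 2" using c1 a0 by (simp add: field_simps)
    have u: "real n * a < pi / 2 + a" using c2 a0 by (simp add: field_simps)
    have "cos (real n * a - pi) \<ge> 0" using l u api by (intro cos_ge_zero) auto
    then have "cos (real n * a) \<le> 0" by (simp add: cos_diff)
    moreover have "cos (real n * t) = cos (real n * a)"
      unfolding a_def by (cases "t \<ge> 0") (auto simp: abs_if)
    moreover have "Re (w ^ n) = cos (real n * t)" using Complex.DeMoivre[of t n] wc by simp
    ultimately show ?thesis using pos[of n] by simp
  qed
qed

lemma one_char: "(\<lambda>_. 1) \<in> characters"
  unfolding characters_def by simp

lemma dual_open_basic:
  assumes "compact K" "open U"
  shows "openin dual_topology ({c. c ` K \<subseteq> U} \<inter> characters)"
  unfolding dual_topology_def openin_subtopology openin_topology_generated_by_iff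
  by (rule exI[of _ "{c. c ` K \<subseteq> U}"], rule conjI[OF generate_topology_on.Basis], use assms in blast) simp

lemma gen_top_triv:
  assumes "generate_topology_on {{c. c ` K \<subseteq> U} | K U. compact (K::'m::topological_space set) \<and> open (U::complex set)} T"
    and "(\<lambda>_. 1) \<in> T"
  shows "\<exists>K. compact K \<and> (\<forall>d. (\<forall>x\<in>K. d x = 1) \<longrightarrow> d \<in> T)"
  using assms
proof (induction rule: generate_topology_on.induct)
  case Empty then show ?case by simp
next
  case (Int a b)
  then obtain K1 K2 where "compact K1" "\<forall>d. (\<forall>x\<in>K1. d x = 1) \<longrightarrow> d \<in> a"
    "compact K2" "\<forall>d. (\<forall>x\<in>K2. d x = 1) \<longrightarrow> d \<in> b" by auto
  then show ?case by (intro exI[of _ "K1 \<union> K2"]) auto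
next
  case (UN K)
  then obtain k where k: "k \<in> K" "(\<lambda>_. 1) \<in> k" by blast
  then obtain L where "compact L" "\<forall>d. (\<forall>x\<in>L. d x = 1) \<longrightarrow> d \<in> k" using UN.IH by blast
  then show ?case using k by blast
next
  case (Basis s)
  then obtain K U where s: "s = {c. c ` K \<subseteq> U}" "compact K" "open U" by blast
  have "\<forall>d. (\<forall>x\<in>K. d x = 1) \<longrightarrow> d \<in> s" using Basis.prems unfolding s by auto
  then show ?case using s by blast
qed

lemma dual_nbhd:
  assumes "openin (dual_topology :: ('m::topological_ab_group_add \<Rightarrow> complex) topology) V" "(\<lambda>_. 1) \<in> V"
  shows "\<exists>K. compact K \<and> (\<forall>c\<in>characters. (\<forall>x\<in>K. c x = 1) \<longrightarrow> c \<in> V)"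
proof -
  obtain T where T: "generate_topology_on {{c. c ` K \<subseteq> U} | K U. compact (K::'m set) \<and> open (U::complex set)} T"
    "V = T \<inter> characters"
    using assms(1) unfolding dual_topology_def openin_subtopology openin_topology_generated_by_iff by blast
  have "(\<lambda>_. 1) \<in> T" using assms(2) T(2) by blast
  from gen_top_triv[OF T(1) this] obtain K where "compact K" "\<forall>d. (\<forall>x\<in>K. d x = 1) \<longrightarrow> d \<in> T" by blast
  then show ?thesis using T(2) by blast
qed


lemma char_hom0:
  assumes "c \<in> characters" shows "c 0 = 1"
proof -
  have h: "\<forall>x y. c (x + y) = c x * c y" and n: "\<forall>x. cmod (c x) = 1"
    using assms unfolding characters_def by auto
  have "c 0 = c 0 * c 0" using h[rule_format, of 0 0] by simp
  moreover have "c 0 \<noteq> 0" using n[rule_format, of 0] by auto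
  ultimately show ?thesis by simp
qed

lemma char_mult:
  assumes "c \<in> characters" "d \<in> characters"
  shows "(\<lambda>x. c x * d x) \<in> characters"
proof -
  have c: "continuous_on UNIV c" "\<forall>x. cmod (c x) = 1" "\<forall>x y. c (x + y) = c x * c y"
    using assms(1) unfolding characters_def by auto
  have d: "continuous_on UNIV d" "\<forall>x. cmod (d x) = 1" "\<forall>x y. d (x + y) = d x * d y"
    using assms(2) unfolding characters_def by auto
  have "continuous_on UNIV (\<lambda>x. c x * d x)" by (rule continuous_on_mult[OF c(1) d(1)])
  moreover have "\<forall>x. cmod (c x * d x) = 1" using c(2) d(2) by (simp add: norm_mult)
  moreover have "\<forall>x y. c (x + y) * d (x + y) = (c x * d x) * (c y * d y)" using c(3) d(3) by (simp add: algebra_simps)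
  ultimately show ?thesis unfolding characters_def by simp
qed

theorem mainTheorem4:
  fixes \<Sigma> :: "nat set" and smul :: "rat \<Rightarrow> 'm::{topological_ab_group_add, t2_space} \<Rightarrow> 'm"
  assumes "\<forall>p\<in>\<Sigma>. prime p"
    and "locally_compact_space (euclidean :: 'm topology)"
    and "is_top_ZS_module \<Sigma> smul"
  shows "compactly_generated \<Sigma> smul \<longleftrightarrow> dual_no_small_submodules \<Sigma> smul"
proof -
  have Mod: "is_ZS_module \<Sigma> smul" and cont: "\<And>r. r \<in> ZS \<Sigma> \<Longrightarrow> continuous_on UNIV (smul r)"
    using assms(3) unfolding is_top_ZS_module_def by auto
  interpret zsm \<Sigma> smul by (rule zsm.intro[OF Mod])
  have one_ZS: "1 \<in> ZS \<Sigma>" using ZS_int[of 1 \<Sigma>] by simp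
  have char_scale: "(\<lambda>x. c (smul r x)) \<in> characters" if c: "c \<in> characters" and r: "r \<in> ZS \<Sigma>" for c r
  proof -
    have c1: "continuous_on UNIV c" and c2: "\<forall>x. cmod (c x) = 1" and c3: "\<forall>x y. c (x + y) = c x * c y"
      using c unfolding characters_def by auto
    have "continuous_on UNIV (c \<circ> smul r)"
      by (rule continuous_on_compose[OF cont[OF r] continuous_on_subset[OF c1]]) simp
    then have "continuous_on UNIV (\<lambda>x. c (smul r x))" by (simp add: o_def)
    moreover have "\<forall>x. cmod (c (smul r x)) = 1" using c2 by simp
    moreover have "\<forall>x y. c (smul r (x + y)) = c (smul r x) * c (smul r y)"
      using c3 smul_add[OF r] by simp
    ultimately show ?thesis unfolding characters_def by simp
  qed
  show ?thesis
  proof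
    assume "compactly_generated \<Sigma> smul"
    then obtain K where K: "compact K" "generated_submodule \<Sigma> smul K = UNIV"
      unfolding compactly_generated_def by blast
    define U where "U = {z::complex. Re z > 0}"
    have oU: "open U" unfolding U_def by (rule open_halfspace_Re_gt)
    define V where "V = {c. c ` K \<subseteq> U} \<inter> (characters :: ('m \<Rightarrow> complex) set)"
    have "openin dual_topology V" unfolding V_def by (rule dual_open_basic[OF K(1) oU])
    moreover have "(\<lambda>_. 1) \<in> V" unfolding V_def U_def using one_char by auto
    moreover have "H = {\<lambda>_. 1}" if H: "is_dual_submodule \<Sigma> smul H" "H \<subseteq> V" for H
    proof -
      have Hc: "H \<subseteq> characters" and H1: "(\<lambda>_. 1) \<in> H"
        and Hs: "\<And>r c. r \<in> ZS \<Sigma> \<Longrightarrow> c \<in> H \<Longrightarrow> (\<lambda>x. c (smul r x)) \<in> H"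
        using H(1) unfolding is_dual_submodule_def by auto
      have stepa: "c k = 1" if c: "c \<in> H" and k: "k \<in> K" for c k
      proof (rule circle_pos_powers)
        have cc: "c \<in> characters" using c Hc by blast
        show "cmod (c k) = 1" using cc unfolding characters_def by simp
        fix n :: nat
        have "(\<lambda>x. c (zm (int n) x)) \<in> H" using Hs[OF ZS_int c] .
        then have "c (zm (int n) k) \<in> U" using H(2) k unfolding V_def by blast
        moreover have "c (zm (int n) k) = c k powi (int n)"
          by (rule char_powi[where D=UNIV]) (use cc in \<open>auto simp: characters_def\<close>)
        ultimately show "Re (c k ^ n) > 0" unfolding U_def by simp
      qed
      have "c = (\<lambda>_. 1)" if c: "c \<in> H" for c
      proof -
        have cc: "c \<in> characters" using c Hc by blast
        define N where "N = {x. \<forall>r\<in>ZS \<Sigma>. c (smul r x) = 1}"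
        have "is_submodule \<Sigma> smul N"
          unfolding is_submodule_def
        proof (intro conjI ballI)
          show "0 \<in> N" unfolding N_def using smul_0 char_hom0[OF cc] by simp
        next
          fix x y assume "x \<in> N" "y \<in> N"
          then show "x + y \<in> N" unfolding N_def using smul_add cc unfolding characters_def by simp
        next
          fix r x assume r: "r \<in> ZS \<Sigma>" and x: "x \<in> N"
          have "\<forall>s\<in>ZS \<Sigma>. c (smul s (smul r x)) = 1"
          proof
            fix s assume s: "s \<in> ZS \<Sigma>"
            have "smul s (smul r x) = smul (s * r) x" using smul_scal_mult[OF s r] by simp
            then show "c (smul s (smul r x)) = 1" using x ZS_mult[OF s r] unfolding N_def by simp
          qed
          then show "smul r x \<in> N" unfolding N_def by simp
        qed
        moreover have "K \<subseteq> N"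
        proof
          fix k assume k: "k \<in> K"
          have "\<forall>r\<in>ZS \<Sigma>. c (smul r k) = 1"
          proof
            fix r assume r: "r \<in> ZS \<Sigma>"
            show "c (smul r k) = 1" using stepa[OF Hs[OF r c] k] by simp
          qed
          then show "k \<in> N" unfolding N_def by simp
        qed
        ultimately have "generated_submodule \<Sigma> smul K \<subseteq> N"
          unfolding generated_submodule_def by blast
        then have "N = UNIV" using K(2) by blast
        have "c x = 1" for x
        proof -
          have "x \<in> N" using \<open>N = UNIV\<close> by simp
          then have "c (smul 1 x) = 1" using one_ZS unfolding N_def by simp
          then show ?thesis using smul_one by simp
        qed
        then show ?thesis by (rule ext)
      qed
      then have "H \<subseteq> {\<lambda>_. 1}" by (intro subsetI) simp
      then show ?thesis using H1 by (intro equalityI) simp_all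
    qed
    ultimately show "dual_no_small_submodules \<Sigma> smul"
      unfolding dual_no_small_submodules_def by (intro exI[of _ V]) simp
  next
    assume "dual_no_small_submodules \<Sigma> smul"
    then obtain V where V: "openin dual_topology V" "(\<lambda>_. 1) \<in> V"
      "\<And>H. is_dual_submodule \<Sigma> smul H \<Longrightarrow> H \<subseteq> V \<Longrightarrow> H = {\<lambda>_. 1}"
      unfolding dual_no_small_submodules_def by blast
    obtain K where K: "compact K" "\<And>c. c \<in> characters \<Longrightarrow> (\<forall>x\<in>K. c x = 1) \<Longrightarrow> c \<in> V"
      using dual_nbhd[OF V(1,2)] by blast
    have "\<exists>U0 C. open U0 \<and> compact C \<and> (0::'m) \<in> U0 \<and> U0 \<subseteq> C"
      using assms(2) unfolding locally_compact_space_def by simp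
    then obtain U0 C where UC: "open U0" "compact C" "(0::'m) \<in> U0" "U0 \<subseteq> C"
      by blast
    define K' where "K' = K \<union> C"
    have cK': "compact K'" unfolding K'_def using K(1) UC(2) by blast
    define N where "N = generated_submodule \<Sigma> smul K'"
    have KN: "K' \<subseteq> N" unfolding N_def generated_submodule_def by blast
    have N0: "0 \<in> N" and Nadd: "\<And>a b. a \<in> N \<Longrightarrow> b \<in> N \<Longrightarrow> a + b \<in> N"
      and Nsm: "\<And>r a. r \<in> ZS \<Sigma> \<Longrightarrow> a \<in> N \<Longrightarrow> smul r a \<in> N"
      unfolding N_def generated_submodule_def is_submodule_def by auto
    have "N = UNIV"
    proof (rule ccontr)
      assume "N \<noteq> UNIV"
      then obtain x0 where x0: "x0 \<notin> N" by blast
      obtain ch where ch: "\<forall>x y. ch (x + y) = ch x * ch y" "\<forall>x. cmod (ch x) = 1" "\<forall>a\<in>N. ch a = 1" "ch x0 \<noteq> 1"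
        using char_exists[OF N0 Nadd Nsm[OF ZS_int] x0] by blast
      have "continuous_on UNIV ch"
      proof (subst continuous_on_eq_continuous_at[OF open_UNIV], intro ballI)
        fix x :: 'm
        define S where "S = (\<lambda>y. y - x) -` U0"
        have "open S" unfolding S_def
          by (rule continuous_open_vimage[OF UC(1)]) (intro continuous_intros)
        moreover have "x \<in> S" unfolding S_def using UC(3) by simp
        moreover have "ch y = ch x" if "y \<in> S" for y
        proof -
          have "y - x \<in> N" using that UC(4) KN unfolding S_def K'_def by blast
          then have "ch (y - x) = 1" using ch(3) by blast
          moreover have "ch y = ch x * ch (y - x)" using ch(1)[rule_format, of x "y - x"] by simp
          ultimately show ?thesis by simp
        qed
        ultimately have "eventually (\<lambda>y. ch y = ch x) (at x)"
          unfolding eventually_at_topological by blast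
        then show "isCont ch x" unfolding isCont_def by (rule tendsto_eventually)
      qed
      then have chc: "ch \<in> characters" unfolding characters_def using ch by simp
      define H where "H = {c \<in> characters. \<forall>a\<in>N. c a = 1}"
      have "is_dual_submodule \<Sigma> smul H"
        unfolding is_dual_submodule_def
      proof (intro conjI ballI)
        show "H \<subseteq> characters" unfolding H_def by blast
        show "(\<lambda>_. 1) \<in> H" unfolding H_def using one_char by simp
      next
        fix c d assume "c \<in> H" "d \<in> H"
        then show "(\<lambda>x. c x * d x) \<in> H" unfolding H_def using char_mult by auto
      next
        fix r c assume r: "r \<in> ZS \<Sigma>" and c: "c \<in> H"
        then show "(\<lambda>x. c (smul r x)) \<in> H" unfolding H_def using char_scale Nsm by auto
      qed
      moreover have "H \<subseteq> V"
        unfolding H_def using K(2) KN unfolding K'_def by blast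
      ultimately have "H = {\<lambda>_. 1}" using V(3) by blast
      moreover have "ch \<in> H" unfolding H_def using chc ch(3) by blast
      ultimately have "ch = (\<lambda>_. 1)" by blast
      then show False using ch(4) by simp
    qed
    then show "compactly_generated \<Sigma> smul"
      unfolding compactly_generated_def N_def using cK' by blast
  qed
qed

end
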